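(* Let $b\in\{0,1\}^d$ be a bitmap and let $q\in\mathbb{R}^d$ be the effective gradient associated with $b$. Then there exists a bitmap $\bar b\ge b$ such that $q$ equals the simple gradient associated with $\bar b$.
   Context: Jackson network with a tree topology on nodes $\{1,\dots,d\}$, root node $1$; $i\to j$ means node $j$ is a child of node $i$. Customers arrive from outside only at node $1$, with rate $\lambda>0$. For $i\to j$, $\mu_{i,j}>0$ is the rate at which node $i$ serves customers and sends them to node $j$; $\mu_{i,0}\ge 0$ is the rate at which node $i$ serves customers who then leave the system. Let $\mu_i=\sum_{k:i\to k}\mu_{i,k}+\mu_{i,0}>0$. Arrival rates: $\Lambda_1=\lambda$ and $\Lambda_j=\Lambda_i\mu_{i,j}/\mu_i$ if $i\to j$. Utilities $\rho_i=\Lambda_i/\mu_i$, assumed to satisfy $\max_i\rho_i<1$; also $\lambda+\sum_i\mu_i=1$. Let $\mu'_{i,0}=\Lambda_i\mu_{i,0}/\mu_i$. A bitmap $b\in\{0,1\}^d$ encodes which nodes are nonempty ($b(i)=1$) or empty ($b(i)=0$); $b'\ge b$ means $b'(i)\ge b(i)$ for all $i$. Effective rates (defined recursively from the leaves up): $M_i(b)=\mu_i$ if $b(i)=1$, and $M_i(b)=\min\big(\mu_i,\ \sum_{k:i\to k}M_k(b)+\mu'_{i,0}\big)$ if $b(i)=0$. The effective gradient of $b$ is $q\in\mathbb{R}^d$ with $q(i)=2\log(\Lambda_i/M_i(b))$. Simple rates: $m_i(b)=\mu_i$ if $b(i)=1$, and $m_i(b)=\sum_{k:i\to k}m_k(b)+\mu'_{i,0}$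 if $b(i)=0$. The simple gradient of $b$ is $q$ with $q(i)=2\log(\Lambda_i/m_i(b))$. *)

theory Defs
  imports Complex_Main
begin

text \<open>Nodes are 1..d. E i j means i -> j (j is a child of i). The exit rate mu_{i,0}
  is mu i 0 (node indices are >= 1, so index 0 is free). Bitmaps are nat => bool
  (True = nonempty), only their values on 1..d matter.\<close>

definition rooted_tree :: "nat \<Rightarrow> (nat \<Rightarrow> nat \<Rightarrow> bool) \<Rightarrow> bool" where
  "rooted_tree d E \<longleftrightarrow> 1 \<le> d
     \<and> (\<forall>i j. E i j \<longrightarrow> i \<in> {1..d} \<and> j \<in> {1..d})
     \<and> (\<forall>i. \<not> E i 1)
     \<and> (\<forall>j\<in>{2..d}. \<exists>!i. E i j)
     \<and> (\<forall>j\<in>{1..d}. (1, j) \<in> {(i, k). E i k}\<^sup>*)"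

definition children :: "nat \<Rightarrow> (nat \<Rightarrow> nat \<Rightarrow> bool) \<Rightarrow> nat \<Rightarrow> nat set" where
  "children d E i = {k \<in> {1..d}. E i k}"

definition mu_tot :: "nat \<Rightarrow> (nat \<Rightarrow> nat \<Rightarrow> bool) \<Rightarrow> (nat \<Rightarrow> nat \<Rightarrow> real) \<Rightarrow> nat \<Rightarrow> real" where
  "mu_tot d E mu i = (\<Sum>k\<in>children d E i. mu i k) + mu i 0"

definition mu_exit :: "nat \<Rightarrow> (nat \<Rightarrow> nat \<Rightarrow> bool) \<Rightarrow> (nat \<Rightarrow> nat \<Rightarrow> real) \<Rightarrow> (nat \<Rightarrow> real) \<Rightarrow> nat \<Rightarrow> real" where
  "mu_exit d E mu Lam i = Lam i * mu i 0 / mu_tot d E mu i"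

text \<open>Recursion from the leaves up, implemented with a fuel parameter; with fuel d
  (>= height of the tree + 1) the base case is never reached on the tree.\<close>

fun effR :: "nat \<Rightarrow> (nat \<Rightarrow> nat \<Rightarrow> bool) \<Rightarrow> (nat \<Rightarrow> nat \<Rightarrow> real) \<Rightarrow> (nat \<Rightarrow> real)
              \<Rightarrow> (nat \<Rightarrow> bool) \<Rightarrow> nat \<Rightarrow> nat \<Rightarrow> real" where
  "effR d E mu Lam b 0 i = mu_tot d E mu i"
| "effR d E mu Lam b (Suc n) i =
     (if b i then mu_tot d E mu i
      else min (mu_tot d E mu i)
               ((\<Sum>k\<in>children d E i. effR d E mu Lam b n k) + mu_exit d E mu Lam i))"

fun simpR :: "nat \<Rightarrow> (nat \<Rightarrow> nat \<Rightarrow> bool) \<Rightarrow> (nat \<Rightarrow> nat \<Rightarrow> real) \<Rightarrow> (nat \<Rightarrow> real)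
              \<Rightarrow> (nat \<Rightarrow> bool) \<Rightarrow> nat \<Rightarrow> nat \<Rightarrow> real" where
  "simpR d E mu Lam b 0 i = mu_tot d E mu i"
| "simpR d E mu Lam b (Suc n) i =
     (if b i then mu_tot d E mu i
      else (\<Sum>k\<in>children d E i. simpR d E mu Lam b n k) + mu_exit d E mu Lam i)"

definition eff_rate where "eff_rate d E mu Lam b i = effR d E mu Lam b d i"
definition simple_rate where "simple_rate d E mu Lam b i = simpR d E mu Lam b d i"

definition eff_grad :: "nat \<Rightarrow> (nat \<Rightarrow> nat \<Rightarrow> bool) \<Rightarrow> (nat \<Rightarrow> nat \<Rightarrow> real) \<Rightarrow> (nat \<Rightarrow> real)
              \<Rightarrow> (nat \<Rightarrow> bool) \<Rightarrow> nat \<Rightarrow> real" where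
  "eff_grad d E mu Lam b i = 2 * ln (Lam i / eff_rate d E mu Lam b i)"

definition simple_grad :: "nat \<Rightarrow> (nat \<Rightarrow> nat \<Rightarrow> bool) \<Rightarrow> (nat \<Rightarrow> nat \<Rightarrow> real) \<Rightarrow> (nat \<Rightarrow> real)
              \<Rightarrow> (nat \<Rightarrow> bool) \<Rightarrow> nat \<Rightarrow> real" where
  "simple_grad d E mu Lam b i = 2 * ln (Lam i / simple_rate d E mu Lam b i)"

definition jackson_tree ::
  "nat \<Rightarrow> (nat \<Rightarrow> nat \<Rightarrow> bool) \<Rightarrow> real \<Rightarrow> (nat \<Rightarrow> nat \<Rightarrow> real) \<Rightarrow> (nat \<Rightarrow> real) \<Rightarrow> bool" where
  "jackson_tree d E lam mu Lam \<longleftrightarrow>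
     rooted_tree d E \<and> lam > 0
     \<and> (\<forall>i j. E i j \<longrightarrow> mu i j > 0)
     \<and> (\<forall>i\<in>{1..d}. mu i 0 \<ge> 0 \<and> mu_tot d E mu i > 0)
     \<and> Lam 1 = lam
     \<and> (\<forall>i j. E i j \<longrightarrow> Lam j = Lam i * mu i j / mu_tot d E mu i)
     \<and> (\<forall>i\<in>{1..d}. Lam i / mu_tot d E mu i < 1)
     \<and> lam + (\<Sum>i\<in>{1..d}. mu_tot d E mu i) = 1"

end

theory Submission
  imports Defs
begin

definition dst :: "(nat \<Rightarrow> nat \<Rightarrow> bool) \<Rightarrow> nat \<Rightarrow> nat" where
  "dst E j = (LEAST n. (1, j) \<in> {(i, k). E i k} ^^ n)"

lemma dst_edge:
  assumes rt: "rooted_tree d E" and e: "E p j"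
  shows "dst E p < dst E j"
proof -
  let ?R = "{(i, k). E i k}"
  from rt e have pj: "p \<in> {1..d}" "j \<in> {1..d}" unfolding rooted_tree_def by auto
  from rt e have j1: "j \<noteq> 1" unfolding rooted_tree_def by auto
  with pj have j2: "j \<in> {2..d}" by auto
  from rt pj have "(1, j) \<in> ?R\<^sup>*" unfolding rooted_tree_def by auto
  then obtain n where n: "(1, j) \<in> ?R ^^ n" using rtrancl_power by blast
  hence jl: "(1, j) \<in> ?R ^^ dst E j" unfolding dst_def by (rule LeastI)
  have "dst E j \<noteq> 0" using jl j1 by (cases "dst E j") auto
  then obtain m where m: "dst E j = Suc m" by (cases "dst E j") auto
  with jl obtain p' where p': "(1, p') \<in> ?R ^^ m" "E p' j" by auto
  from rt j2 have "\<exists>!i. E i j" unfolding rooted_tree_def by auto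
  with p' e have "p' = p" by auto
  with p' have "dst E p \<le> m" unfolding dst_def by (auto intro: Least_le)
  with m show ?thesis by simp
qed

lemma dst_trancl:
  assumes rt: "rooted_tree d E" and "(i, j) \<in> {(i, k). E i k}\<^sup>+"
  shows "dst E i < dst E j"
  using assms(2)
proof (induction rule: trancl_induct)
  case (base y) then show ?case using dst_edge[OF rt] by auto
next
  case (step y z) then show ?case using dst_edge[OF rt, of y z] by auto
qed

definition desc :: "(nat \<Rightarrow> nat \<Rightarrow> bool) \<Rightarrow> nat \<Rightarrow> nat set" where
  "desc E i = {j. (i, j) \<in> {(i, k). E i k}\<^sup>*}"

lemma desc_sub:
  assumes rt: "rooted_tree d E"
  shows "desc E i \<subseteq> insert i {1..d}"
proof
  fix j assume "j \<in> desc E i"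
  hence "(i, j) \<in> {(i, k). E i k}\<^sup>*" by (simp add: desc_def)
  then show "j \<in> insert i {1..d}"
  proof (cases rule: rtranclE)
    case (step y) then show ?thesis using rt unfolding rooted_tree_def by auto
  qed auto
qed

lemma desc_fin: "rooted_tree d E \<Longrightarrow> finite (desc E i)"
  using desc_sub finite_subset by (metis finite_atLeastAtMost finite_insert)

lemma desc_card_le: "rooted_tree d E \<Longrightarrow> i \<in> {1..d} \<Longrightarrow> card (desc E i) \<le> d"
proof -
  assume rt: "rooted_tree d E" and i: "i \<in> {1..d}"
  have "desc E i \<subseteq> {1..d}" using desc_sub[OF rt, of i] i by auto
  hence "card (desc E i) \<le> card {1..d}" by (intro card_mono) auto
  thus ?thesis by simp
qed

lemma desc_card_pos: "rooted_tree d E \<Longrightarrow> card (desc E i) \<ge> 1"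
proof -
  assume rt: "rooted_tree d E"
  have "i \<in> desc E i" by (simp add: desc_def)
  thus ?thesis using desc_fin[OF rt] by (metis One_nat_def Suc_leI card_gt_0_iff empty_iff)
qed

lemma desc_child:
  assumes rt: "rooted_tree d E" and e: "E i k"
  shows "card (desc E k) < card (desc E i)"
proof (rule psubset_card_mono[OF desc_fin[OF rt]])
  have "desc E k \<subseteq> desc E i" using e unfolding desc_def
    by (auto intro: converse_rtrancl_into_rtrancl)
  moreover have "i \<in> desc E i" by (simp add: desc_def)
  moreover have "i \<notin> desc E k"
  proof
    assume "i \<in> desc E k"
    hence "(k, i) \<in> {(i, k). E i k}\<^sup>*" by (simp add: desc_def)
    with e have "(i, i) \<in> {(i, k). E i k}\<^sup>+" by (auto intro: rtrancl_into_trancl2)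
    with dst_trancl[OF rt] show False by blast
  qed
  ultimately show "desc E k \<subset> desc E i" by blast
qed

lemma eff_stable:
  assumes rt: "rooted_tree d E"
  shows "\<forall>i\<in>{1..d}. card (desc E i) = c \<longrightarrow> (\<forall>n m. n \<ge> c \<longrightarrow> m \<ge> c \<longrightarrow>
           effR d E mu Lam b n i = effR d E mu Lam b m i)"
proof (induction c rule: less_induct)
  case (less c)
  show ?case
  proof (intro ballI impI allI)
    fix i n m assume i: "i \<in> {1..d}" and c: "card (desc E i) = c" and n: "n \<ge> c" and m: "m \<ge> c"
    have c1: "c \<ge> 1" using desc_card_pos[OF rt, of i] c by simp
    obtain n' where n': "n = Suc n'" using n c1 by (cases n) auto
    obtain m' where m': "m = Suc m'" using m c1 by (cases m) auto
    have ch: "\<And>k. k \<in> children d E i \<Longrightarrow> effR d E mu Lam b n' k = effR d E mu Lam b m' k"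
    proof -
      fix k assume k: "k \<in> children d E i"
      hence kk: "k \<in> {1..d}" "E i k" by (auto simp: children_def)
      have lt: "card (desc E k) < c" using desc_child[OF rt kk(2)] c by simp
      show "effR d E mu Lam b n' k = effR d E mu Lam b m' k"
        using less[OF lt] kk lt n m n' m' by auto
    qed
    show "effR d E mu Lam b n i = effR d E mu Lam b m i"
      unfolding n' m' using ch by (simp cong: sum.cong)
  qed
qed

lemma eff_stable':
  assumes rt: "rooted_tree d E" and "i \<in> {1..d}" "n \<ge> card (desc E i)" "m \<ge> card (desc E i)"
  shows "effR d E mu Lam b n i = effR d E mu Lam b m i"
  using eff_stable[OF rt] assms by blast

lemma main_rate:
  fixes b :: "nat \<Rightarrow> bool" and mu :: "nat \<Rightarrow> nat \<Rightarrow> real" and Lam :: "nat \<Rightarrow> real"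
  assumes rt: "rooted_tree d E"
  defines "bb \<equiv> \<lambda>i. b i \<or> eff_rate d E mu Lam b i = mu_tot d E mu i"
  shows "\<forall>i\<in>{1..d}. card (desc E i) = c \<longrightarrow> (\<forall>n. n \<ge> c \<longrightarrow>
           simpR d E mu Lam bb n i = eff_rate d E mu Lam b i)"
proof (induction c rule: less_induct)
  case (less c)
  show ?case
  proof (intro ballI impI allI)
    fix i n assume i: "i \<in> {1..d}" and c: "card (desc E i) = c" and n: "n \<ge> c"
    have c1: "c \<ge> 1" using desc_card_pos[OF rt, of i] c by simp
    have cd: "c \<le> d" using desc_card_le[OF rt i] c by simp
    obtain n' where n': "n = Suc n'" using n c1 by (cases n) auto
    obtain d' where d': "d = Suc d'" using cd c1 by (cases d) auto
    show "simpR d E mu Lam bb n i = eff_rate d E mu Lam b i"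
    proof (cases "bb i")
      case True
      then show ?thesis unfolding n' eff_rate_def using d' by (auto simp: bb_def eff_rate_def)
    next
      case False
      hence nb: "\<not> b i" and ne: "effR d E mu Lam b d i \<noteq> mu_tot d E mu i"
        by (auto simp: bb_def eff_rate_def)
      have ch: "\<And>k. k \<in> children d E i \<Longrightarrow> simpR d E mu Lam bb n' k = effR d E mu Lam b d' k"
      proof -
        fix k assume k: "k \<in> children d E i"
        hence kk: "k \<in> {1..d}" "E i k" by (auto simp: children_def)
        have lt: "card (desc E k) < c" using desc_child[OF rt kk(2)] c by simp
        have "simpR d E mu Lam bb n' k = eff_rate d E mu Lam b k"
          using less[OF lt] kk lt n n' by auto
        also have "\<dots> = effR d E mu Lam b d' k" unfolding eff_rate_def
          by (rule eff_stable'[OF rt kk(1)]) (use lt cd d' in auto)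
        finally show "simpR d E mu Lam bb n' k = effR d E mu Lam b d' k" .
      qed
      have "eff_rate d E mu Lam b i =
          (\<Sum>k\<in>children d E i. effR d E mu Lam b d' k) + mu_exit d E mu Lam i"
        using ne nb unfolding eff_rate_def d' by (auto simp: min_def)
      moreover have "simpR d E mu Lam bb n i =
          (\<Sum>k\<in>children d E i. effR d E mu Lam b d' k) + mu_exit d E mu Lam i"
        unfolding n' using False ch by (simp cong: sum.cong)
      ultimately show ?thesis by simp
    qed
  qed
qed

theorem mainTheorem1:
  fixes d :: nat and E :: "nat \<Rightarrow> nat \<Rightarrow> bool" and lam :: real
    and mu :: "nat \<Rightarrow> nat \<Rightarrow> real" and Lam :: "nat \<Rightarrow> real" and b :: "nat \<Rightarrow> bool"
  assumes "jackson_tree d E lam mu Lam"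
  shows "\<exists>bb :: nat \<Rightarrow> bool. (\<forall>i\<in>{1..d}. b i \<longrightarrow> bb i)
           \<and> (\<forall>i\<in>{1..d}. eff_grad d E mu Lam b i = simple_grad d E mu Lam bb i)"
proof -
  have rt: "rooted_tree d E" using assms by (simp add: jackson_tree_def)
  define bb where "bb = (\<lambda>i. b i \<or> eff_rate d E mu Lam b i = mu_tot d E mu i)"
  have "\<forall>i\<in>{1..d}. simple_rate d E mu Lam bb i = eff_rate d E mu Lam b i"
  proof
    fix i assume i: "i \<in> {1..d}"
    show "simple_rate d E mu Lam bb i = eff_rate d E mu Lam b i"
      unfolding simple_rate_def bb_def
      using main_rate[OF rt, where b=b and mu=mu and Lam=Lam and c="card (desc E i)"] i desc_card_le[OF rt i] by blast
  qed
  then show ?thesis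
    by (intro exI[of _ bb]) (auto simp: bb_def eff_grad_def simple_grad_def)
qed

end
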